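(* Let $\varepsilon\ge0$ and let $\phi:\mathcal{B}\to\mathcal{C}\subseteq\mathcal{B}$ satisfy both $\|\phi(b)-b\|_1\le\varepsilon$ for all $b$ and $\phi(b_1)=\phi(b_2)\Rightarrow\|b_1-b_2\|_1\le\varepsilon$. Let $\{p_c\}_{c\in\mathcal{C}}$ be any family of distributions with $p_c$ supported on $\phi^{-1}(c)$. Let $\pi:\mathcal{B}\to\Delta(\mathcal{A})$ satisfy $\|\pi(b_1)-\pi(b_2)\|_1\le L_\pi\|b_1-b_2\|_1$ (local stability), and assume $V^{[\pi_\phi]_{\rm true}}_{\rm true}$ is $L_V$-Lipschitz on $\mathcal{B}$ with respect to $\|\cdot\|_1$ (value stability). Then $$\big\|V^\pi_{\rm true}-[V^{\pi_\phi}_{\rm bin}]_{\rm true}\big\|_\infty\le L^{[1]}_\phi\,\varepsilon,\qquad L^{[1]}_\phi:=\frac{(L_\pi+1)R_{\max}+2L_V}{1-\gamma}+\frac{\gamma R_{\max}L_\pi+R_{\max}}{(1-\gamma)^2}.$$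
   Context: Finite POMDP with finite $\mathcal{S},\mathcal{A},\mathcal{O}$, transition $\mathbb{T}$, emission $\mathbb{O}$, reward $r:\mathcal{S}\times\mathcal{A}\to[0,R_{\max}]$, discount $\gamma\in[0,1)$. $P(o\mid b,a)=\sum_{s,s'}b(s)\mathbb{T}(s'\mid s,a)\mathbb{O}(o\mid s')$, $b^{o,a}(s')\propto\sum_s b(s)\mathbb{T}(s'\mid s,a)\mathbb{O}(o\mid s')$; $\mathcal{B}\subseteq\Delta(\mathcal{S})$ is the countable set of reachable beliefs. True system: belief MDP on $\mathcal{B}$ with reward $r(b,a)=\sum_s b(s)r(s,a)$ and transitions $b\mapsto b^{o,a}$ w.p. $P(o\mid b,a)$; $V^\pi_{\rm true}(b)=\mathbb{E}[\sum_{t\ge0}\gamma^tr(b_t,a_t)\mid b_0=b]$. Abstract system: MDP on $\mathcal{C}$ with reward $r_\phi(c,a)=\sum_b p_c(b)r(b,a)$ and transitions $P_\phi(c'\mid c,a)=\sum_bp_c(b)\sum_{o:\phi(b^{o,a})=c'}P(o\mid b,a)$. Abstract policy $\pi_\phi(c):=\pi(c)$ with abstract value $V^{\pi_\phi}_{\rm bin}$. Lifts: $[V_{\rm bin}]_{\rm true}(b)=V_{\rm bin}(\phi(b))$, $[\pi_\phi]_{\rm true}(b)=\pi_\phi(\phi(b))$. *)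

theory Defs
  imports "HOL-Analysis.Analysis"
begin

text \<open>Beliefs are functions 's => real; a belief is a distribution if it is
nonnegative and sums to 1. Transition T s a s' = T(s'|s,a), emission Ob s' ob = O(ob|s').\<close>

definition is_dist :: "('x::finite \<Rightarrow> real) \<Rightarrow> bool" where
  "is_dist b \<longleftrightarrow> (\<forall>x. 0 \<le> b x) \<and> (\<Sum>x\<in>UNIV. b x) = 1"

definition l1dist :: "('x::finite \<Rightarrow> real) \<Rightarrow> ('x \<Rightarrow> real) \<Rightarrow> real" where
  "l1dist b1 b2 = (\<Sum>x\<in>UNIV. \<bar>b1 x - b2 x\<bar>)"

definition Pobs :: "('s::finite \<Rightarrow> 'a \<Rightarrow> 's \<Rightarrow> real) \<Rightarrow> ('s \<Rightarrow> 'o \<Rightarrow> real)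
    \<Rightarrow> ('s \<Rightarrow> real) \<Rightarrow> 'a \<Rightarrow> 'o \<Rightarrow> real" where
  "Pobs T Ob b a ob = (\<Sum>s\<in>UNIV. \<Sum>s'\<in>UNIV. b s * T s a s' * Ob s' ob)"

definition bupd :: "('s::finite \<Rightarrow> 'a \<Rightarrow> 's \<Rightarrow> real) \<Rightarrow> ('s \<Rightarrow> 'o \<Rightarrow> real)
    \<Rightarrow> ('s \<Rightarrow> real) \<Rightarrow> 'a \<Rightarrow> 'o \<Rightarrow> ('s \<Rightarrow> real)" where
  "bupd T Ob b a ob = (\<lambda>s'. (\<Sum>s\<in>UNIV. b s * T s a s') * Ob s' ob / Pobs T Ob b a ob)"

inductive_set reach :: "('s::finite \<Rightarrow> 'a \<Rightarrow> 's \<Rightarrow> real) \<Rightarrow> ('s \<Rightarrow> 'o \<Rightarrow> real)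
    \<Rightarrow> ('s \<Rightarrow> real) \<Rightarrow> ('s \<Rightarrow> real) set"
  for T Ob b0 where
  init: "b0 \<in> reach T Ob b0"
| step: "b \<in> reach T Ob b0 \<Longrightarrow> 0 < Pobs T Ob b a ob \<Longrightarrow> bupd T Ob b a ob \<in> reach T Ob b0"

definition rb :: "('s::finite \<Rightarrow> 'a \<Rightarrow> real) \<Rightarrow> ('s \<Rightarrow> real) \<Rightarrow> 'a \<Rightarrow> real" where
  "rb r b a = (\<Sum>s\<in>UNIV. b s * r s a)"

fun Vtrue_n :: "('s::finite \<Rightarrow> 'a::finite \<Rightarrow> 's \<Rightarrow> real) \<Rightarrow> ('s \<Rightarrow> 'o::finite \<Rightarrow> real)
    \<Rightarrow> ('s \<Rightarrow> 'a \<Rightarrow> real) \<Rightarrow> real \<Rightarrow> (('s \<Rightarrow> real) \<Rightarrow> 'a \<Rightarrow> real)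
    \<Rightarrow> nat \<Rightarrow> ('s \<Rightarrow> real) \<Rightarrow> real" where
  "Vtrue_n T Ob r \<gamma> \<pi> 0 b = 0"
| "Vtrue_n T Ob r \<gamma> \<pi> (Suc n) b =
     (\<Sum>a\<in>UNIV. \<pi> b a * (rb r b a + \<gamma> * (\<Sum>ob\<in>UNIV. Pobs T Ob b a ob * Vtrue_n T Ob r \<gamma> \<pi> n (bupd T Ob b a ob))))"

definition Vtrue where
  "Vtrue T Ob r \<gamma> \<pi> b = lim (\<lambda>n. Vtrue_n T Ob r \<gamma> \<pi> n b)"

definition rphi where
  "rphi r B p c a = infsum (\<lambda>b. p c b * rb r b a) B"

definition Pphi where
  "Pphi T Ob B p \<phi> c a c' =
     infsum (\<lambda>b. p c b * (\<Sum>ob\<in>{ob. \<phi> (bupd T Ob b a ob) = c'}. Pobs T Ob b a ob)) B"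

fun Vbin_n :: "('s::finite \<Rightarrow> 'a::finite \<Rightarrow> 's \<Rightarrow> real) \<Rightarrow> ('s \<Rightarrow> 'o::finite \<Rightarrow> real)
    \<Rightarrow> ('s \<Rightarrow> 'a \<Rightarrow> real) \<Rightarrow> real \<Rightarrow> ('s \<Rightarrow> real) set \<Rightarrow> ('s \<Rightarrow> real) set
    \<Rightarrow> (('s \<Rightarrow> real) \<Rightarrow> ('s \<Rightarrow> real) \<Rightarrow> real) \<Rightarrow> (('s \<Rightarrow> real) \<Rightarrow> ('s \<Rightarrow> real))
    \<Rightarrow> (('s \<Rightarrow> real) \<Rightarrow> 'a \<Rightarrow> real) \<Rightarrow> nat \<Rightarrow> ('s \<Rightarrow> real) \<Rightarrow> real" where
  "Vbin_n T Ob r \<gamma> B C p \<phi> \<pi> 0 c = 0"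
| "Vbin_n T Ob r \<gamma> B C p \<phi> \<pi> (Suc n) c =
     (\<Sum>a\<in>UNIV. \<pi> c a * (rphi r B p c a +
        \<gamma> * infsum (\<lambda>c'. Pphi T Ob B p \<phi> c a c' * Vbin_n T Ob r \<gamma> B C p \<phi> \<pi> n c') C))"

definition Vbin where
  "Vbin T Ob r \<gamma> B C p \<phi> \<pi> c = lim (\<lambda>n. Vbin_n T Ob r \<gamma> B C p \<phi> \<pi> n c)"

end

theory Submission
  imports Defs
begin


lemma dist_sum:
  fixes w f :: "'x::finite \<Rightarrow> real"
  assumes "is_dist w" "\<And>x. w x \<noteq> 0 \<Longrightarrow> \<bar>f x\<bar> \<le> K"
  shows "\<bar>\<Sum>x\<in>UNIV. w x * f x\<bar> \<le> K"
proof -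
  have "\<bar>\<Sum>x\<in>UNIV. w x * f x\<bar> \<le> (\<Sum>x\<in>UNIV. \<bar>w x * f x\<bar>)" by (rule sum_abs)
  also have "\<dots> \<le> (\<Sum>x\<in>UNIV. w x * K)"
  proof (rule sum_mono)
    fix x show "\<bar>w x * f x\<bar> \<le> w x * K"
    proof (cases "w x = 0")
      case True thus ?thesis by simp
    next
      case False
      hence "\<bar>f x\<bar> \<le> K" using assms(2) by blast
      moreover have "0 \<le> w x" using assms(1) unfolding is_dist_def by blast
      ultimately show ?thesis by (simp add: abs_mult mult_left_mono)
    qed
  qed
  also have "\<dots> = K" using assms(1) unfolding is_dist_def by (simp add: sum_distrib_right[symmetric])
  finally show ?thesis .
qed

lemma has_sum_sum_fin:
  fixes f :: "'i \<Rightarrow> 'x \<Rightarrow> real"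
  assumes "finite I" "\<And>i. i \<in> I \<Longrightarrow> (f i has_sum s i) A"
  shows "((\<lambda>x. \<Sum>i\<in>I. f i x) has_sum (\<Sum>i\<in>I. s i)) A"
  using assms by (induction I rule: finite_induct) (auto intro!: has_sum_add)

lemma has_sum_diff_real:
  fixes f g :: "'x \<Rightarrow> real"
  assumes "(f has_sum a) A" "(g has_sum b) A"
  shows "((\<lambda>x. f x - g x) has_sum (a - b)) A"
  using has_sum_add[OF assms(1) has_sum_cmult_right[OF assms(2), of "-1"]] by simp

lemma conv_geom:
  fixes x :: "nat \<Rightarrow> real"
  assumes "\<And>n. \<bar>x (Suc n) - x n\<bar> \<le> g ^ n * R" "0 \<le> g" "g < 1"
  shows "convergent x"
proof -
  have s: "summable (\<lambda>n. x (Suc n) - x n)"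
    by (rule summable_comparison_test'[where g = "\<lambda>n. g^n * R" and N = 0])
       (use assms in \<open>auto intro: summable_mult2 summable_geometric\<close>)
  have "(\<lambda>n. x 0 + (\<Sum>k<n. x (Suc k) - x k)) \<longlonglongrightarrow> x 0 + (\<Sum>n. x (Suc n) - x n)"
    by (rule tendsto_add[OF tendsto_const summable_LIMSEQ[OF s]])
  then have "x \<longlonglongrightarrow> x 0 + (\<Sum>n. x (Suc n) - x n)"
    by (simp add: sum_lessThan_telescope)
  then show ?thesis by (auto simp: convergent_def)
qed

lemma lim_le_seq:
  fixes f :: "nat \<Rightarrow> real"
  assumes "f \<longlonglongrightarrow> l" "g \<longlonglongrightarrow> m" "\<And>n. f n \<le> g n"
  shows "l \<le> m"
  using tendsto_le[OF trivial_limit_sequentially assms(2) assms(1)] assms(3) by simp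

locale pomdp =
  fixes T :: "'s::finite \<Rightarrow> 'a::finite \<Rightarrow> 's \<Rightarrow> real"
    and Ob :: "'s \<Rightarrow> 'o::finite \<Rightarrow> real"
    and r :: "'s \<Rightarrow> 'a \<Rightarrow> real"
    and b0 :: "'s \<Rightarrow> real"
    and Rmax \<gamma> :: real
  assumes T_dist: "\<And>s a. is_dist (T s a)"
    and Ob_dist: "\<And>s'. is_dist (Ob s')"
    and b0_dist: "is_dist b0"
    and r_bounds: "\<And>s a. 0 \<le> r s a \<and> r s a \<le> Rmax"
    and gamma0: "0 \<le> \<gamma>" and gamma1: "\<gamma> < 1"
begin

abbreviation "B \<equiv> reach T Ob b0"
definition "M = Rmax / (1 - \<gamma>)"

lemma Rmax_nonneg: "0 \<le> Rmax" using r_bounds[of undefined undefined] by linarith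
lemma M_nonneg: "0 \<le> M" unfolding M_def using Rmax_nonneg gamma1 by simp
lemma M_eq: "Rmax + \<gamma> * M = M" unfolding M_def using gamma1 by (simp add: field_simps)

lemma P_nonneg: "is_dist b \<Longrightarrow> 0 \<le> Pobs T Ob b a ob"
  unfolding Pobs_def using T_dist Ob_dist unfolding is_dist_def by (auto intro!: sum_nonneg)

lemma P_sum: assumes "is_dist b" shows "(\<Sum>ob\<in>UNIV. Pobs T Ob b a ob) = 1"
proof -
  have "(\<Sum>ob\<in>UNIV. Pobs T Ob b a ob) = (\<Sum>ob\<in>UNIV. \<Sum>s\<in>UNIV. \<Sum>s'\<in>UNIV. b s * T s a s' * Ob s' ob)"
    unfolding Pobs_def ..
  also have "\<dots> = (\<Sum>s\<in>UNIV. \<Sum>ob\<in>UNIV. \<Sum>s'\<in>UNIV. b s * T s a s' * Ob s' ob)" by (rule sum.swap)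
  also have "\<dots> = (\<Sum>s\<in>UNIV. \<Sum>s'\<in>UNIV. \<Sum>ob\<in>UNIV. b s * T s a s' * Ob s' ob)"
    by (rule sum.cong[OF refl], rule sum.swap)
  also have "\<dots> = (\<Sum>s\<in>UNIV. \<Sum>s'\<in>UNIV. b s * T s a s' * (\<Sum>ob\<in>UNIV. Ob s' ob))"
    by (simp add: sum_distrib_left)
  also have "\<dots> = (\<Sum>s\<in>UNIV. b s * (\<Sum>s'\<in>UNIV. T s a s'))"
    using Ob_dist unfolding is_dist_def by (simp add: sum_distrib_left)
  also have "\<dots> = 1" using T_dist assms unfolding is_dist_def by simp
  finally show ?thesis .
qed

lemma P_dist: "is_dist b \<Longrightarrow> is_dist (\<lambda>ob. Pobs T Ob b a ob)"
  using P_nonneg P_sum unfolding is_dist_def by blast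

lemma U_dist: assumes "is_dist b" "Pobs T Ob b a ob \<noteq> 0" shows "is_dist (bupd T Ob b a ob)"
proof -
  have Ppos: "0 < Pobs T Ob b a ob" using P_nonneg[OF assms(1), of a ob] assms(2) by linarith
  have eq: "Pobs T Ob b a ob = (\<Sum>s'\<in>UNIV. (\<Sum>s\<in>UNIV. b s * T s a s') * Ob s' ob)"
    unfolding Pobs_def by (subst sum.swap) (simp add: sum_distrib_right)
  have nn: "0 \<le> (\<Sum>s\<in>UNIV. b s * T s a s') * Ob s' ob" for s'
    using assms(1) T_dist Ob_dist unfolding is_dist_def by (auto intro!: sum_nonneg mult_nonneg_nonneg)
  show ?thesis unfolding is_dist_def bupd_def
    using nn Ppos by (auto simp: sum_divide_distrib[symmetric] eq[symmetric])
qed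

lemma B_dist: "b \<in> B \<Longrightarrow> is_dist b"
  by (induction rule: reach.induct) (auto simp: b0_dist U_dist)

lemma U_B: "b \<in> B \<Longrightarrow> Pobs T Ob b a ob \<noteq> 0 \<Longrightarrow> bupd T Ob b a ob \<in> B"
  using reach.step P_nonneg B_dist by (metis less_eq_real_def)

lemma rb_bounds: assumes "is_dist b" shows "0 \<le> rb r b a \<and> rb r b a \<le> Rmax"
proof
  show "0 \<le> rb r b a" unfolding rb_def using assms r_bounds unfolding is_dist_def
    by (auto intro!: sum_nonneg)
  have "rb r b a \<le> (\<Sum>s\<in>UNIV. b s * Rmax)" unfolding rb_def using assms r_bounds unfolding is_dist_def
    by (auto intro!: sum_mono mult_left_mono)
  also have "\<dots> = Rmax" using assms unfolding is_dist_def by (simp add: sum_distrib_right[symmetric])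
  finally show "rb r b a \<le> Rmax" .
qed

lemma obs_avg:
  assumes "b \<in> B" "\<And>ob. Pobs T Ob b a ob \<noteq> 0 \<Longrightarrow> \<bar>g ob\<bar> \<le> K"
  shows "\<bar>\<Sum>ob\<in>UNIV. Pobs T Ob b a ob * g ob\<bar> \<le> K"
  by (rule dist_sum[OF P_dist[OF B_dist[OF assms(1)]]]) (use assms(2) in auto)

end


context pomdp begin

context
  fixes \<sigma> :: "('s \<Rightarrow> real) \<Rightarrow> 'a \<Rightarrow> real"
  assumes \<sigma>_dist: "\<And>b. b \<in> B \<Longrightarrow> is_dist (\<sigma> b)"
begin

lemma Vn_bound: "b \<in> B \<Longrightarrow> \<bar>Vtrue_n T Ob r \<gamma> \<sigma> n b\<bar> \<le> M"
proof (induction n arbitrary: b)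
  case 0 show ?case using M_nonneg by simp
next
  case (Suc n)
  have "\<bar>\<Sum>a\<in>UNIV. \<sigma> b a * (rb r b a + \<gamma> * (\<Sum>ob\<in>UNIV. Pobs T Ob b a ob * Vtrue_n T Ob r \<gamma> \<sigma> n (bupd T Ob b a ob)))\<bar> \<le> M"
  proof (rule dist_sum[OF \<sigma>_dist[OF Suc.prems]])
    fix a
    have "\<bar>\<Sum>ob\<in>UNIV. Pobs T Ob b a ob * Vtrue_n T Ob r \<gamma> \<sigma> n (bupd T Ob b a ob)\<bar> \<le> M"
      by (rule obs_avg[OF Suc.prems]) (auto intro!: Suc.IH U_B Suc.prems simp del: Vtrue_n.simps)
    then have "\<bar>\<gamma> * (\<Sum>ob\<in>UNIV. Pobs T Ob b a ob * Vtrue_n T Ob r \<gamma> \<sigma> n (bupd T Ob b a ob))\<bar> \<le> \<gamma> * M"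
      using gamma0 by (simp add: abs_mult mult_left_mono)
    moreover have "\<bar>rb r b a\<bar> \<le> Rmax" using rb_bounds[OF B_dist[OF Suc.prems]] by auto
    ultimately show "\<bar>rb r b a + \<gamma> * (\<Sum>ob\<in>UNIV. Pobs T Ob b a ob * Vtrue_n T Ob r \<gamma> \<sigma> n (bupd T Ob b a ob))\<bar> \<le> M"
      using M_eq by linarith
  qed
  then show ?case by simp
qed

lemma Vn_diff: "b \<in> B \<Longrightarrow> \<bar>Vtrue_n T Ob r \<gamma> \<sigma> (Suc n) b - Vtrue_n T Ob r \<gamma> \<sigma> n b\<bar> \<le> \<gamma> ^ n * Rmax"
proof (induction n arbitrary: b)
  case 0
  have "\<bar>\<Sum>a\<in>UNIV. \<sigma> b a * rb r b a\<bar> \<le> Rmax"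
    by (rule dist_sum[OF \<sigma>_dist[OF 0]]) (use rb_bounds[OF B_dist[OF 0]] in auto)
  then show ?case by simp
next
  case (Suc n)
  let ?V = "Vtrue_n T Ob r \<gamma> \<sigma>"
  have eqg: "?V (Suc m) b - ?V (Suc k) b = (\<Sum>a\<in>UNIV. \<sigma> b a * (\<gamma> * (\<Sum>ob\<in>UNIV. Pobs T Ob b a ob *
     (?V m (bupd T Ob b a ob) - ?V k (bupd T Ob b a ob)))))" for m k
    by (simp only: Vtrue_n.simps(2)) (simp add: sum_subtractf right_diff_distrib distrib_left sum.distrib)
  note eq = eqg[of "Suc n" n]
  have "\<bar>\<Sum>a\<in>UNIV. \<sigma> b a * (\<gamma> * (\<Sum>ob\<in>UNIV. Pobs T Ob b a ob *
     (?V (Suc n) (bupd T Ob b a ob) - ?V n (bupd T Ob b a ob))))\<bar> \<le> \<gamma> * (\<gamma> ^ n * Rmax)"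
  proof (rule dist_sum[OF \<sigma>_dist[OF Suc.prems]])
    fix a
    have "\<bar>\<Sum>ob\<in>UNIV. Pobs T Ob b a ob * (?V (Suc n) (bupd T Ob b a ob) - ?V n (bupd T Ob b a ob))\<bar> \<le> \<gamma> ^ n * Rmax"
      by (rule obs_avg[OF Suc.prems]) (auto intro!: Suc.IH U_B Suc.prems simp del: Vtrue_n.simps)
    then show "\<bar>\<gamma> * (\<Sum>ob\<in>UNIV. Pobs T Ob b a ob * (?V (Suc n) (bupd T Ob b a ob) - ?V n (bupd T Ob b a ob)))\<bar> \<le> \<gamma> * (\<gamma> ^ n * Rmax)"
      using gamma0 by (simp add: abs_mult mult_left_mono)
  qed
  then show ?case using eq by simp
qed

lemma V_lim: assumes "b \<in> B" shows "(\<lambda>n. Vtrue_n T Ob r \<gamma> \<sigma> n b) \<longlonglongrightarrow> Vtrue T Ob r \<gamma> \<sigma> b"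
  unfolding Vtrue_def using conv_geom[of "\<lambda>n. Vtrue_n T Ob r \<gamma> \<sigma> n b" \<gamma> Rmax] Vn_diff[OF assms] gamma0 gamma1
  by (simp add: convergent_LIMSEQ_iff)

lemma V_bound: assumes "b \<in> B" shows "\<bar>Vtrue T Ob r \<gamma> \<sigma> b\<bar> \<le> M"
  by (rule lim_le_seq[OF tendsto_rabs[OF V_lim[OF assms]] tendsto_const]) (rule Vn_bound[OF assms])

lemma V_bellman:
  assumes b: "b \<in> B"
  shows "Vtrue T Ob r \<gamma> \<sigma> b = (\<Sum>a\<in>UNIV. \<sigma> b a * (rb r b a + \<gamma> * (\<Sum>ob\<in>UNIV. Pobs T Ob b a ob * Vtrue T Ob r \<gamma> \<sigma> (bupd T Ob b a ob))))"
proof -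
  let ?V = "Vtrue_n T Ob r \<gamma> \<sigma>"
  have 1: "(\<lambda>n. ?V (Suc n) b) \<longlonglongrightarrow> Vtrue T Ob r \<gamma> \<sigma> b"
    using V_lim[OF b] by (rule LIMSEQ_Suc)
  have t: "(\<lambda>n. Pobs T Ob b a ob * ?V n (bupd T Ob b a ob)) \<longlonglongrightarrow> Pobs T Ob b a ob * Vtrue T Ob r \<gamma> \<sigma> (bupd T Ob b a ob)" for a ob
  proof (cases "Pobs T Ob b a ob = 0")
    case True then show ?thesis by simp
  next
    case False then show ?thesis by (intro tendsto_mult_left V_lim U_B b)
  qed
  have 2: "(\<lambda>n. ?V (Suc n) b) \<longlonglongrightarrow> (\<Sum>a\<in>UNIV. \<sigma> b a * (rb r b a + \<gamma> * (\<Sum>ob\<in>UNIV. Pobs T Ob b a ob * Vtrue T Ob r \<gamma> \<sigma> (bupd T Ob b a ob))))"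
    unfolding Vtrue_n.simps by (intro tendsto_intros t)
  show ?thesis using LIMSEQ_unique[OF 1 2] .
qed

end
end


locale binned = pomdp T Ob r b0 Rmax \<gamma>
  for T :: "'s::finite \<Rightarrow> 'a::finite \<Rightarrow> 's \<Rightarrow> real"
    and Ob :: "'s \<Rightarrow> 'o::finite \<Rightarrow> real"
    and r :: "'s \<Rightarrow> 'a \<Rightarrow> real"
    and b0 :: "'s \<Rightarrow> real"
    and Rmax \<gamma> :: real +
  fixes \<epsilon> L\<pi> LV :: real
    and C :: "('s \<Rightarrow> real) set"
    and \<phi> :: "('s \<Rightarrow> real) \<Rightarrow> ('s \<Rightarrow> real)"
    and p :: "('s \<Rightarrow> real) \<Rightarrow> ('s \<Rightarrow> real) \<Rightarrow> real"
    and \<pi> :: "('s \<Rightarrow> real) \<Rightarrow> 'a \<Rightarrow> real"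
  assumes eps: "0 \<le> \<epsilon>"
    and C_sub: "C \<subseteq> reach T Ob b0"
    and phi_into: "\<And>b. b \<in> reach T Ob b0 \<Longrightarrow> \<phi> b \<in> C"
    and phi_close: "\<And>b. b \<in> reach T Ob b0 \<Longrightarrow> l1dist (\<phi> b) b \<le> \<epsilon>"
    and phi_bins: "\<And>b1 b2. b1 \<in> reach T Ob b0 \<Longrightarrow> b2 \<in> reach T Ob b0 \<Longrightarrow> \<phi> b1 = \<phi> b2 \<Longrightarrow> l1dist b1 b2 \<le> \<epsilon>"
    and p_nonneg: "\<And>c b. c \<in> C \<Longrightarrow> 0 \<le> p c b"
    and p_supp: "\<And>c b. c \<in> C \<Longrightarrow> p c b \<noteq> 0 \<Longrightarrow> b \<in> reach T Ob b0 \<and> \<phi> b = c"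
    and p_sum: "\<And>c. c \<in> C \<Longrightarrow> ((\<lambda>b. p c b) has_sum 1) (reach T Ob b0)"
    and pi_dist: "\<And>b. b \<in> reach T Ob b0 \<Longrightarrow> is_dist (\<pi> b)"
    and Lpi_nonneg: "0 \<le> L\<pi>"
    and pi_lip: "\<And>b1 b2. b1 \<in> reach T Ob b0 \<Longrightarrow> b2 \<in> reach T Ob b0 \<Longrightarrow> l1dist (\<pi> b1) (\<pi> b2) \<le> L\<pi> * l1dist b1 b2"
    and LV_nonneg: "0 \<le> LV"
    and V_lip: "\<And>b1 b2. b1 \<in> reach T Ob b0 \<Longrightarrow> b2 \<in> reach T Ob b0 \<Longrightarrow>
        \<bar>Vtrue T Ob r \<gamma> (\<lambda>b. \<pi> (\<phi> b)) b1 - Vtrue T Ob r \<gamma> (\<lambda>b. \<pi> (\<phi> b)) b2\<bar> \<le> LV * l1dist b1 b2"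
begin

lemma avg:
  assumes c: "c \<in> C" and K: "0 \<le> K" and gb: "\<And>b'. b' \<in> B \<Longrightarrow> p c b' \<noteq> 0 \<Longrightarrow> \<bar>g b'\<bar> \<le> K"
  shows avg_summable: "(\<lambda>b'. p c b' * g b') summable_on B"
    and avg_bound: "\<bar>infsum (\<lambda>b'. p c b' * g b') B\<bar> \<le> K"
proof -
  have ps: "((\<lambda>b'. K * p c b') has_sum K) B"
    using has_sum_cmult_right[OF p_sum[OF c], of K] by simp
  have bd: "\<bar>p c b' * g b'\<bar> \<le> K * p c b'" if "b' \<in> B" for b'
  proof (cases "p c b' = 0")
    case True then show ?thesis by simp
  next
    case False
    then have "\<bar>g b'\<bar> \<le> K" using gb that by blast
    then have "p c b' * \<bar>g b'\<bar> \<le> p c b' * K" using p_nonneg[OF c, of b'] by (rule mult_left_mono)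
    then show ?thesis using p_nonneg[OF c, of b'] by (simp add: abs_mult algebra_simps)
  qed
  have "(\<lambda>b'. \<bar>p c b' * g b'\<bar>) summable_on B"
    by (rule summable_on_comparison_test[OF has_sum_imp_summable[OF ps]]) (use bd in auto)
  then show su: "(\<lambda>b'. p c b' * g b') summable_on B"
    by (subst summable_on_iff_abs_summable_on_real) simp
  show "\<bar>infsum (\<lambda>b'. p c b' * g b') B\<bar> \<le> K"
    using norm_infsum_le[OF has_sum_infsum[OF su] ps] bd by simp
qed

lemma key:
  assumes c: "c \<in> C" and K: "0 \<le> K" and fb: "\<And>c'. c' \<in> C \<Longrightarrow> \<bar>f c'\<bar> \<le> K"
  shows "infsum (\<lambda>c'. Pphi T Ob B p \<phi> c a c' * f c') C
       = infsum (\<lambda>b'. p c b' * (\<Sum>ob\<in>UNIV. Pobs T Ob b' a ob * f (\<phi> (bupd T Ob b' a ob)))) B"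
proof -
  define g where "g = (\<lambda>(b'::'s\<Rightarrow>real, ob::'o). p c b' * Pobs T Ob b' a ob * f (\<phi> (bupd T Ob b' a ob)))"
  define k where "k = (\<lambda>(b'::'s\<Rightarrow>real, ob::'o). \<phi> (bupd T Ob b' a ob))"
  define h where "h = (\<lambda>(c'::'s\<Rightarrow>real) (x::('s\<Rightarrow>real)\<times>'o). if k x = c' then g x else 0)"
  let ?X = "B \<times> (UNIV::'o set)"
  have gz: "k x \<in> C" if "x \<in> ?X" "g x \<noteq> 0" for x
  proof -
    obtain b' ob where x: "x = (b', ob)" by fastforce
    have "Pobs T Ob b' a ob \<noteq> 0" using that(2) unfolding g_def x by auto
    then have "bupd T Ob b' a ob \<in> B" using U_B that(1) x by auto
    then show ?thesis unfolding k_def x using phi_into by auto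
  qed
  have qnn: "0 \<le> K * (p c (fst x) * Pobs T Ob (fst x) a (snd x))" if "x \<in> ?X" for x
    using that K p_nonneg[OF c] P_nonneg[OF B_dist] by auto
  have gb: "\<bar>g x\<bar> \<le> K * (p c (fst x) * Pobs T Ob (fst x) a (snd x))" if "x \<in> ?X" for x
  proof (cases "g x = 0")
    case True then show ?thesis using qnn[OF that] by simp
  next
    case False
    obtain b' ob where x: "x = (b', ob)" by fastforce
    have "\<bar>f (k x)\<bar> \<le> K" using fb gz[OF that False] by blast
    moreover have "0 \<le> p c b' * Pobs T Ob b' a ob" using that x p_nonneg[OF c] P_nonneg[OF B_dist] by auto
    ultimately have "(p c b' * Pobs T Ob b' a ob) * \<bar>f (k x)\<bar> \<le> (p c b' * Pobs T Ob b' a ob) * K"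
      by (intro mult_left_mono)
    then show ?thesis unfolding g_def k_def x using p_nonneg[OF c, of b'] P_nonneg[OF B_dist, of b' a ob] that x
      by (simp add: abs_mult algebra_simps)
  qed
  have qs: "(\<lambda>x. K * (p c (fst x) * Pobs T Ob (fst x) a (snd x))) summable_on ?X"
  proof (rule nonneg_bdd_above_summable_on)
    show "\<And>x. x \<in> ?X \<Longrightarrow> 0 \<le> K * (p c (fst x) * Pobs T Ob (fst x) a (snd x))" by (rule qnn)
    show "bdd_above (sum (\<lambda>x. K * (p c (fst x) * Pobs T Ob (fst x) a (snd x))) ` {F. F \<subseteq> ?X \<and> finite F})"
    proof (rule bdd_aboveI2)
      fix F assume F: "F \<in> {F. F \<subseteq> ?X \<and> finite F}"
      then have Fs: "F \<subseteq> ?X" "finite F" by auto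
      have ps: "((\<lambda>b'. K * p c b') has_sum K) B"
        using has_sum_cmult_right[OF p_sum[OF c], of K] by simp
      have sub: "F \<subseteq> fst ` F \<times> UNIV" by force
      have "sum (\<lambda>x. K * (p c (fst x) * Pobs T Ob (fst x) a (snd x))) F
          \<le> sum (\<lambda>x. K * (p c (fst x) * Pobs T Ob (fst x) a (snd x))) (fst ` F \<times> UNIV)"
        by (rule sum_mono2) (use Fs sub qnn in auto)
      also have "\<dots> = (\<Sum>b'\<in>fst ` F. \<Sum>ob\<in>UNIV. K * (p c b' * Pobs T Ob b' a ob))"
        by (simp add: sum.cartesian_product case_prod_beta)
      also have "\<dots> = (\<Sum>b'\<in>fst ` F. K * p c b')"
      proof (rule sum.cong[OF refl])
        fix b' assume "b' \<in> fst ` F"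
        then have "b' \<in> B" using Fs by auto
        have "(\<Sum>ob\<in>UNIV. K * (p c b' * Pobs T Ob b' a ob)) = K * (p c b' * (\<Sum>ob\<in>UNIV. Pobs T Ob b' a ob))"
          by (simp add: sum_distrib_left)
        then show "(\<Sum>ob\<in>UNIV. K * (p c b' * Pobs T Ob b' a ob)) = K * p c b'"
          using P_sum[OF B_dist[OF \<open>b' \<in> B\<close>], of a] by simp
      qed
      also have "(\<Sum>b'\<in>fst ` F. K * p c b') \<le> K"
        by (rule finite_sum_le_has_sum[OF ps])
           (use Fs in \<open>auto intro!: mult_nonneg_nonneg K p_nonneg[OF c]\<close>)
      finally show "sum (\<lambda>x. K * (p c (fst x) * Pobs T Ob (fst x) a (snd x))) F \<le> K" .
    qed
  qed
  have gs: "g summable_on ?X"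
  proof -
    have "(\<lambda>x. \<bar>g x\<bar>) summable_on ?X"
      by (rule summable_on_comparison_test[OF qs]) (use gb in auto)
    then show ?thesis by (subst summable_on_iff_abs_summable_on_real) simp
  qed
  have hs: "(\<lambda>(c', x). h c' x) summable_on (C \<times> ?X)"
  proof -
    define X0 where "X0 = {x \<in> ?X. k x \<in> C}"
    have inj: "inj_on (\<lambda>x. (k x, x)) X0" by (auto simp: inj_on_def)
    have "g summable_on X0" by (rule summable_on_subset_banach[OF gs]) (auto simp: X0_def)
    then have "((\<lambda>(c', x). h c' x) \<circ> (\<lambda>x. (k x, x))) summable_on X0"
      by (rule summable_on_cong[THEN iffD1, rotated]) (simp add: h_def)
    then have "(\<lambda>(c', x). h c' x) summable_on ((\<lambda>x. (k x, x)) ` X0)"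
      using summable_on_reindex[OF inj] by blast
    then show ?thesis
      by (rule summable_on_cong_neutral[THEN iffD1, rotated -1]) (auto simp: h_def X0_def)
  qed
  have inner1: "infsum (h c') ?X = Pphi T Ob B p \<phi> c a c' * f c'" if c': "c' \<in> C" for c'
  proof -
    have "(\<lambda>x. \<bar>h c' x\<bar>) summable_on ?X"
      by (rule summable_on_comparison_test[OF qs]) (use gb qnn in \<open>auto simp: h_def\<close>)
    then have hcs: "h c' summable_on ?X" by (subst summable_on_iff_abs_summable_on_real) simp
    have "infsum (h c') ?X = infsum (\<lambda>b'. infsum (\<lambda>ob. h c' (b', ob)) UNIV) B"
      using infsum_Sigma_banach[OF hcs] by simp
    also have "\<dots> = infsum (\<lambda>b'. p c b' * (\<Sum>ob\<in>{ob. \<phi> (bupd T Ob b' a ob) = c'}. Pobs T Ob b' a ob) * f c') B"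
    proof (rule infsum_cong)
      fix b' assume "b' \<in> B"
      have "infsum (\<lambda>ob. h c' (b', ob)) UNIV = (\<Sum>ob\<in>UNIV. if \<phi> (bupd T Ob b' a ob) = c' then g (b', ob) else 0)"
        by (simp add: h_def k_def)
      also have "\<dots> = (\<Sum>ob\<in>{ob. \<phi> (bupd T Ob b' a ob) = c'}. g (b', ob))"
        by (simp add: sum.inter_filter[symmetric])
      also have "\<dots> = (\<Sum>ob\<in>{ob. \<phi> (bupd T Ob b' a ob) = c'}. p c b' * Pobs T Ob b' a ob * f c')"
        by (rule sum.cong) (auto simp: g_def)
      also have "\<dots> = p c b' * (\<Sum>ob\<in>{ob. \<phi> (bupd T Ob b' a ob) = c'}. Pobs T Ob b' a ob) * f c'"
        by (simp add: sum_distrib_left sum_distrib_right)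
      finally show "infsum (\<lambda>ob. h c' (b', ob)) UNIV = p c b' * (\<Sum>ob\<in>{ob. \<phi> (bupd T Ob b' a ob) = c'}. Pobs T Ob b' a ob) * f c'" .
    qed
    also have "\<dots> = infsum (\<lambda>b'. p c b' * (\<Sum>ob\<in>{ob. \<phi> (bupd T Ob b' a ob) = c'}. Pobs T Ob b' a ob)) B * f c'"
    proof (rule infsum_cmult_left)
      show "(\<lambda>b'. p c b' * (\<Sum>ob\<in>{ob. \<phi> (bupd T Ob b' a ob) = c'}. Pobs T Ob b' a ob)) summable_on B"
      proof (rule avg_summable[OF c zero_le_one])
        fix b' assume b': "b' \<in> B"
        have "0 \<le> (\<Sum>ob\<in>{ob. \<phi> (bupd T Ob b' a ob) = c'}. Pobs T Ob b' a ob)"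
          using P_nonneg[OF B_dist[OF b']] by (auto intro: sum_nonneg)
        moreover have "(\<Sum>ob\<in>{ob. \<phi> (bupd T Ob b' a ob) = c'}. Pobs T Ob b' a ob) \<le> (\<Sum>ob\<in>UNIV. Pobs T Ob b' a ob)"
          using P_nonneg[OF B_dist[OF b']] by (intro sum_mono2) auto
        ultimately show "\<bar>\<Sum>ob\<in>{ob. \<phi> (bupd T Ob b' a ob) = c'}. Pobs T Ob b' a ob\<bar> \<le> 1"
          using P_sum[OF B_dist[OF b']] by simp
      qed
    qed
    also have "\<dots> = Pphi T Ob B p \<phi> c a c' * f c'" unfolding Pphi_def ..
    finally show ?thesis .
  qed
  have inner2: "infsum (\<lambda>c'. h c' x) C = g x" if x: "x \<in> ?X" for x
  proof (cases "g x = 0")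
    case True
    then have "(\<lambda>c'. h c' x) = (\<lambda>_. 0)" by (auto simp: h_def)
    then show ?thesis using True by simp
  next
    case False
    then have kx: "k x \<in> C" using gz x by blast
    have "infsum (\<lambda>c'. h c' x) C = infsum (\<lambda>c'. h c' x) {k x}"
      by (rule infsum_cong_neutral) (auto simp: h_def kx)
    also have "\<dots> = g x" by (simp add: h_def)
    finally show ?thesis .
  qed
  have "infsum (\<lambda>c'. Pphi T Ob B p \<phi> c a c' * f c') C = infsum (\<lambda>c'. infsum (h c') ?X) C"
    by (rule infsum_cong) (simp add: inner1)
  also have "\<dots> = infsum (\<lambda>x. infsum (\<lambda>c'. h c' x) C) ?X"
    by (rule infsum_swap_banach[OF hs])
  also have "\<dots> = infsum g ?X"
    by (rule infsum_cong) (simp add: inner2)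
  also have "\<dots> = infsum (\<lambda>b'. infsum (\<lambda>ob. g (b', ob)) UNIV) B"
    using infsum_Sigma_banach[OF gs] by simp
  also have "\<dots> = infsum (\<lambda>b'. p c b' * (\<Sum>ob\<in>UNIV. Pobs T Ob b' a ob * f (\<phi> (bupd T Ob b' a ob)))) B"
    by (rule infsum_cong) (simp add: g_def sum_distrib_left mult.assoc)
  finally show ?thesis .
qed

end


context pomdp begin

lemma q_bound:
  assumes b: "b \<in> B" and F: "\<And>ob. Pobs T Ob b a ob \<noteq> 0 \<Longrightarrow> \<bar>F (bupd T Ob b a ob)\<bar> \<le> K"
  shows "\<bar>rb r b a + \<gamma> * (\<Sum>ob\<in>UNIV. Pobs T Ob b a ob * F (bupd T Ob b a ob))\<bar> \<le> Rmax + \<gamma> * K"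
proof -
  have "\<bar>\<Sum>ob\<in>UNIV. Pobs T Ob b a ob * F (bupd T Ob b a ob)\<bar> \<le> K"
    by (rule obs_avg[OF b]) (rule F)
  then have "\<bar>\<gamma> * (\<Sum>ob\<in>UNIV. Pobs T Ob b a ob * F (bupd T Ob b a ob))\<bar> \<le> \<gamma> * K"
    using gamma0 by (simp add: abs_mult mult_left_mono)
  moreover have "\<bar>rb r b a\<bar> \<le> Rmax" using rb_bounds[OF B_dist[OF b]] by auto
  ultimately show ?thesis by linarith
qed

lemma bell_bound:
  assumes w: "is_dist w" and b: "b \<in> B" and F: "\<And>a ob. Pobs T Ob b a ob \<noteq> 0 \<Longrightarrow> \<bar>F (bupd T Ob b a ob)\<bar> \<le> K"
  shows "\<bar>\<Sum>a\<in>UNIV. w a * (rb r b a + \<gamma> * (\<Sum>ob\<in>UNIV. Pobs T Ob b a ob * F (bupd T Ob b a ob)))\<bar> \<le> Rmax + \<gamma> * K"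
  by (rule dist_sum[OF w]) (rule q_bound[OF b, of _ F], rule F)

lemma bell_diff:
  assumes w: "is_dist w" and b: "b \<in> B"
    and FG: "\<And>a ob. Pobs T Ob b a ob \<noteq> 0 \<Longrightarrow> \<bar>F (bupd T Ob b a ob) - G (bupd T Ob b a ob)\<bar> \<le> D"
  shows "\<bar>(\<Sum>a\<in>UNIV. w a * (rb r b a + \<gamma> * (\<Sum>ob\<in>UNIV. Pobs T Ob b a ob * F (bupd T Ob b a ob))))
          - (\<Sum>a\<in>UNIV. w a * (rb r b a + \<gamma> * (\<Sum>ob\<in>UNIV. Pobs T Ob b a ob * G (bupd T Ob b a ob))))\<bar> \<le> \<gamma> * D"
proof -
  have eq: "(\<Sum>a\<in>UNIV. w a * (rb r b a + \<gamma> * (\<Sum>ob\<in>UNIV. Pobs T Ob b a ob * F (bupd T Ob b a ob))))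
          - (\<Sum>a\<in>UNIV. w a * (rb r b a + \<gamma> * (\<Sum>ob\<in>UNIV. Pobs T Ob b a ob * G (bupd T Ob b a ob))))
          = (\<Sum>a\<in>UNIV. w a * (\<gamma> * (\<Sum>ob\<in>UNIV. Pobs T Ob b a ob * (F (bupd T Ob b a ob) - G (bupd T Ob b a ob)))))"
    by (simp add: sum_subtractf right_diff_distrib distrib_left sum.distrib)
  have "\<bar>\<Sum>a\<in>UNIV. w a * (\<gamma> * (\<Sum>ob\<in>UNIV. Pobs T Ob b a ob * (F (bupd T Ob b a ob) - G (bupd T Ob b a ob))))\<bar> \<le> \<gamma> * D"
  proof (rule dist_sum[OF w])
    fix a
    have "\<bar>\<Sum>ob\<in>UNIV. Pobs T Ob b a ob * (F (bupd T Ob b a ob) - G (bupd T Ob b a ob))\<bar> \<le> D"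
      by (rule obs_avg[OF b]) (rule FG)
    then show "\<bar>\<gamma> * (\<Sum>ob\<in>UNIV. Pobs T Ob b a ob * (F (bupd T Ob b a ob) - G (bupd T Ob b a ob)))\<bar> \<le> \<gamma> * D"
      using gamma0 by (simp add: abs_mult mult_left_mono)
  qed
  then show ?thesis using eq by simp
qed

end

context binned begin

abbreviation "Vb n c \<equiv> Vbin_n T Ob r \<gamma> B C p \<phi> \<pi> n c"

definition "Qb n c b' = (\<Sum>a\<in>UNIV. \<pi> c a * (rb r b' a + \<gamma> * (\<Sum>ob\<in>UNIV. Pobs T Ob b' a ob * Vb n (\<phi> (bupd T Ob b' a ob)))))"

lemma C_dist: "c \<in> C \<Longrightarrow> is_dist (\<pi> c)" using C_sub pi_dist by blast

lemma vb_step: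
  assumes c: "c \<in> C" and K: "0 \<le> K" and vb: "\<And>c'. c' \<in> C \<Longrightarrow> \<bar>Vb n c'\<bar> \<le> K"
  shows "Vb (Suc n) c = infsum (\<lambda>b'. p c b' * Qb n c b') B"
proof -
  let ?S = "\<lambda>b' a. \<Sum>ob\<in>UNIV. Pobs T Ob b' a ob * Vb n (\<phi> (bupd T Ob b' a ob))"
  have k: "infsum (\<lambda>c'. Pphi T Ob B p \<phi> c a c' * Vb n c') C = infsum (\<lambda>b'. p c b' * ?S b' a) B" for a
    by (rule key[OF c K vb])
  have hr: "((\<lambda>b'. p c b' * rb r b' a) has_sum rphi r B p c a) B" for a
    unfolding rphi_def
    by (rule has_sum_infsum[OF avg_summable[OF c Rmax_nonneg]]) (use rb_bounds[OF B_dist] in auto)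
  have ho: "((\<lambda>b'. p c b' * ?S b' a) has_sum infsum (\<lambda>b'. p c b' * ?S b' a) B) B" for a
  proof (rule has_sum_infsum[OF avg_summable[OF c K]])
    fix b' assume b': "b' \<in> B"
    show "\<bar>?S b' a\<bar> \<le> K"
      by (rule obs_avg[OF b']) (use U_B[OF b'] phi_into vb in blast)
  qed
  have hs: "((\<lambda>b'. \<Sum>a\<in>UNIV. \<pi> c a * (p c b' * rb r b' a + \<gamma> * (p c b' * ?S b' a))) has_sum
      (\<Sum>a\<in>UNIV. \<pi> c a * (rphi r B p c a + \<gamma> * infsum (\<lambda>b'. p c b' * ?S b' a) B))) B"
    by (rule has_sum_sum_fin) (auto intro!: has_sum_cmult_right has_sum_add hr ho)
  have eqf: "(\<lambda>b'. \<Sum>a\<in>UNIV. \<pi> c a * (p c b' * rb r b' a + \<gamma> * (p c b' * ?S b' a))) = (\<lambda>b'. p c b' * Qb n c b')"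
  proof (rule ext)
    fix b'
    show "(\<Sum>a\<in>UNIV. \<pi> c a * (p c b' * rb r b' a + \<gamma> * (p c b' * ?S b' a))) = p c b' * Qb n c b'"
      unfolding Qb_def sum_distrib_left[of "p c b'"] by (intro sum.cong refl) (simp add: algebra_simps sum_distrib_left)
  qed
  have "Vb (Suc n) c = (\<Sum>a\<in>UNIV. \<pi> c a * (rphi r B p c a + \<gamma> * infsum (\<lambda>b'. p c b' * ?S b' a) B))"
    by (simp add: k)
  also have "\<dots> = infsum (\<lambda>b'. p c b' * Qb n c b') B"
    by (rule infsumI[OF hs[unfolded eqf], symmetric])
  finally show ?thesis .
qed

end


context binned begin

lemma vb_bound: "c \<in> C \<Longrightarrow> \<bar>Vb n c\<bar> \<le> M"
proof (induction n arbitrary: c)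
  case 0 show ?case using M_nonneg by simp
next
  case (Suc n)
  have "\<bar>infsum (\<lambda>b'. p c b' * Qb n c b') B\<bar> \<le> M"
  proof (rule avg_bound[OF Suc.prems M_nonneg])
    fix b' assume b': "b' \<in> B"
    have "\<bar>Qb n c b'\<bar> \<le> Rmax + \<gamma> * M"
      unfolding Qb_def
      by (rule bell_bound[OF C_dist[OF Suc.prems] b', of "\<lambda>x. Vb n (\<phi> x)"])
         (use U_B[OF b'] phi_into Suc.IH in blast)
    then show "\<bar>Qb n c b'\<bar> \<le> M" using M_eq by simp
  qed
  then show ?case using vb_step[OF Suc.prems M_nonneg Suc.IH] by simp
qed

lemma qb_bound: assumes c: "c \<in> C" and b': "b' \<in> B" shows "\<bar>Qb n c b'\<bar> \<le> M"
proof -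
  have "\<bar>Qb n c b'\<bar> \<le> Rmax + \<gamma> * M"
    unfolding Qb_def
    by (rule bell_bound[OF C_dist[OF c] b', of "\<lambda>x. Vb n (\<phi> x)"])
       (use U_B[OF b'] phi_into vb_bound in blast)
  then show ?thesis using M_eq by simp
qed

lemma vb_diff: "c \<in> C \<Longrightarrow> \<bar>Vb (Suc n) c - Vb n c\<bar> \<le> \<gamma> ^ n * Rmax"
proof (induction n arbitrary: c)
  case 0
  have "\<bar>infsum (\<lambda>b'. p c b' * Qb 0 c b') B\<bar> \<le> Rmax"
  proof (rule avg_bound[OF 0 Rmax_nonneg])
    fix b' assume b': "b' \<in> B"
    have "\<bar>Qb 0 c b'\<bar> \<le> Rmax + \<gamma> * 0"
      unfolding Qb_def
      by (rule bell_bound[OF C_dist[OF 0] b', of "\<lambda>x. Vb 0 (\<phi> x)"]) simp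
    then show "\<bar>Qb 0 c b'\<bar> \<le> Rmax" by simp
  qed
  moreover have "Vb (Suc 0) c = infsum (\<lambda>b'. p c b' * Qb 0 c b') B"
    by (rule vb_step[OF 0 order_refl]) simp
  ultimately show ?case by simp
next
  case (Suc n)
  have e1: "Vb (Suc (Suc n)) c = infsum (\<lambda>b'. p c b' * Qb (Suc n) c b') B"
    by (rule vb_step[OF Suc.prems M_nonneg vb_bound])
  have e2: "Vb (Suc n) c = infsum (\<lambda>b'. p c b' * Qb n c b') B"
    by (rule vb_step[OF Suc.prems M_nonneg vb_bound])
  have s1: "((\<lambda>b'. p c b' * Qb (Suc n) c b') has_sum Vb (Suc (Suc n)) c) B"
    unfolding e1 by (rule has_sum_infsum[OF avg_summable[OF Suc.prems M_nonneg qb_bound[OF Suc.prems]]])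
  have s2: "((\<lambda>b'. p c b' * Qb n c b') has_sum Vb (Suc n) c) B"
    unfolding e2 by (rule has_sum_infsum[OF avg_summable[OF Suc.prems M_nonneg qb_bound[OF Suc.prems]]])
  have "((\<lambda>b'. p c b' * (Qb (Suc n) c b' - Qb n c b')) has_sum (Vb (Suc (Suc n)) c - Vb (Suc n) c)) B"
    using has_sum_diff_real[OF s1 s2] by (simp add: right_diff_distrib)
  then have eq: "Vb (Suc (Suc n)) c - Vb (Suc n) c = infsum (\<lambda>b'. p c b' * (Qb (Suc n) c b' - Qb n c b')) B"
    by (rule infsumI[symmetric])
  have "\<bar>infsum (\<lambda>b'. p c b' * (Qb (Suc n) c b' - Qb n c b')) B\<bar> \<le> \<gamma> * (\<gamma> ^ n * Rmax)"
  proof (rule avg_bound[OF Suc.prems])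
    show "0 \<le> \<gamma> * (\<gamma> ^ n * Rmax)" using gamma0 Rmax_nonneg by simp
    fix b' assume b': "b' \<in> B"
    show "\<bar>Qb (Suc n) c b' - Qb n c b'\<bar> \<le> \<gamma> * (\<gamma> ^ n * Rmax)"
      unfolding Qb_def
      by (rule bell_diff[OF C_dist[OF Suc.prems] b', of "\<lambda>x. Vb (Suc n) (\<phi> x)" "\<lambda>x. Vb n (\<phi> x)"])
         (use U_B[OF b'] phi_into Suc.IH in blast)
  qed
  then show ?case using eq by simp
qed

lemma vb_lim: assumes c: "c \<in> C" shows "(\<lambda>n. Vb n c) \<longlonglongrightarrow> Vbin T Ob r \<gamma> B C p \<phi> \<pi> c"
  unfolding Vbin_def using conv_geom[of "\<lambda>n. Vb n c" \<gamma> Rmax] vb_diff[OF c] gamma0 gamma1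
  by (simp add: convergent_LIMSEQ_iff)

abbreviation "W \<equiv> Vtrue T Ob r \<gamma> (\<lambda>b. \<pi> (\<phi> b))"

lemma piphi_dist: "b \<in> B \<Longrightarrow> is_dist (\<pi> (\<phi> b))"
  using C_dist phi_into by blast

lemma W_bellman: "b \<in> B \<Longrightarrow> W b = (\<Sum>a\<in>UNIV. \<pi> (\<phi> b) a * (rb r b a + \<gamma> * (\<Sum>ob\<in>UNIV. Pobs T Ob b a ob * W (bupd T Ob b a ob))))"
  by (rule V_bellman[of "\<lambda>b. \<pi> (\<phi> b)"]) (auto intro: piphi_dist)
lemma W_bound: "b \<in> B \<Longrightarrow> \<bar>W b\<bar> \<le> M"
  by (rule V_bound[of "\<lambda>b. \<pi> (\<phi> b)"]) (auto intro: piphi_dist)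
lemma W_lim: "b \<in> B \<Longrightarrow> (\<lambda>n. Vtrue_n T Ob r \<gamma> (\<lambda>b. \<pi> (\<phi> b)) n b) \<longlonglongrightarrow> W b"
  by (rule V_lim[of "\<lambda>b. \<pi> (\<phi> b)"]) (auto intro: piphi_dist)

definition "E = LV * \<epsilon> / (1 - \<gamma>)"
lemma E_nonneg: "0 \<le> E" unfolding E_def using LV_nonneg eps gamma1 by simp
lemma E_eq: "LV * \<epsilon> + \<gamma> * E = E" unfolding E_def using gamma1 by (simp add: field_simps)

lemma part2: "b \<in> B \<Longrightarrow> \<bar>W b - Vb n (\<phi> b)\<bar> \<le> E + \<gamma> ^ n * M"
proof (induction n arbitrary: b)
  case 0 then show ?case using W_bound[OF 0] E_nonneg by simp
next
  case (Suc n)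
  define c where "c = \<phi> b"
  have c: "c \<in> C" unfolding c_def using phi_into Suc.prems by blast
  have e1: "Vb (Suc n) c = infsum (\<lambda>b'. p c b' * Qb n c b') B"
    by (rule vb_step[OF c M_nonneg vb_bound])
  have s1: "((\<lambda>b'. p c b' * Qb n c b') has_sum Vb (Suc n) c) B"
    unfolding e1 by (rule has_sum_infsum[OF avg_summable[OF c M_nonneg qb_bound[OF c]]])
  have s2: "((\<lambda>b'. p c b' * W b) has_sum W b) B"
    using has_sum_cmult_left[OF p_sum[OF c], of "W b"] by simp
  have "((\<lambda>b'. p c b' * (Qb n c b' - W b)) has_sum (Vb (Suc n) c - W b)) B"
    using has_sum_diff_real[OF s1 s2] by (simp add: right_diff_distrib)
  then have eq: "Vb (Suc n) c - W b = infsum (\<lambda>b'. p c b' * (Qb n c b' - W b)) B"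
    by (rule infsumI[symmetric])
  have K0: "0 \<le> E + \<gamma> ^ Suc n * M" using E_nonneg M_nonneg gamma0 by simp
  have "\<bar>infsum (\<lambda>b'. p c b' * (Qb n c b' - W b)) B\<bar> \<le> E + \<gamma> ^ Suc n * M"
  proof (rule avg_bound[OF c K0])
    fix b' assume b': "b' \<in> B" and pn: "p c b' \<noteq> 0"
    have phib': "\<phi> b' = c" using p_supp[OF c pn] by blast
    have Wb': "W b' = (\<Sum>a\<in>UNIV. \<pi> c a * (rb r b' a + \<gamma> * (\<Sum>ob\<in>UNIV. Pobs T Ob b' a ob * W (bupd T Ob b' a ob))))"
      using W_bellman[OF b'] phib' by simp
    have d1: "\<bar>Qb n c b' - W b'\<bar> \<le> \<gamma> * (E + \<gamma> ^ n * M)"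
      unfolding Qb_def Wb'
    proof (rule bell_diff[OF C_dist[OF c] b', of "\<lambda>x. Vb n (\<phi> x)" W])
      fix a ob assume "Pobs T Ob b' a ob \<noteq> 0"
      then have "bupd T Ob b' a ob \<in> B" using U_B[OF b'] by blast
      then show "\<bar>Vb n (\<phi> (bupd T Ob b' a ob)) - W (bupd T Ob b' a ob)\<bar> \<le> E + \<gamma> ^ n * M"
        using Suc.IH by (simp add: abs_minus_commute)
    qed
    have "l1dist b' b \<le> \<epsilon>" using phi_bins[OF b' Suc.prems] phib' c_def by blast
    then have d2: "\<bar>W b' - W b\<bar> \<le> LV * \<epsilon>"
      using V_lip[OF b' Suc.prems] LV_nonneg by (meson mult_left_mono order_trans)
    have "\<bar>Qb n c b' - W b\<bar> \<le> \<gamma> * (E + \<gamma> ^ n * M) + LV * \<epsilon>" using d1 d2 by linarith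
    also have "\<dots> = E + \<gamma> ^ Suc n * M" using E_eq by (simp add: algebra_simps)
    finally show "\<bar>Qb n c b' - W b\<bar> \<le> E + \<gamma> ^ Suc n * M" .
  qed
  then show ?case using eq c_def by (simp add: abs_minus_commute)
qed

end


context binned begin

definition "K1 = L\<pi> * \<epsilon> * M / (1 - \<gamma>)"
lemma K1_nonneg: "0 \<le> K1" unfolding K1_def using Lpi_nonneg eps M_nonneg gamma1 by simp
lemma K1_eq: "L\<pi> * \<epsilon> * M + \<gamma> * K1 = K1" unfolding K1_def using gamma1 by (simp add: field_simps)

lemma part1: "b \<in> B \<Longrightarrow> \<bar>Vtrue_n T Ob r \<gamma> \<pi> n b - Vtrue_n T Ob r \<gamma> (\<lambda>b. \<pi> (\<phi> b)) n b\<bar> \<le> K1"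
proof (induction n arbitrary: b)
  case 0 then show ?case using K1_nonneg by simp
next
  case (Suc n)
  note b = Suc.prems
  define Qp where "Qp a = rb r b a + \<gamma> * (\<Sum>ob\<in>UNIV. Pobs T Ob b a ob * Vtrue_n T Ob r \<gamma> \<pi> n (bupd T Ob b a ob))" for a
  define X where "X = (\<Sum>a\<in>UNIV. \<pi> (\<phi> b) a * (rb r b a + \<gamma> * (\<Sum>ob\<in>UNIV. Pobs T Ob b a ob * Vtrue_n T Ob r \<gamma> \<pi> n (bupd T Ob b a ob))))
     - (\<Sum>a\<in>UNIV. \<pi> (\<phi> b) a * (rb r b a + \<gamma> * (\<Sum>ob\<in>UNIV. Pobs T Ob b a ob * Vtrue_n T Ob r \<gamma> (\<lambda>b. \<pi> (\<phi> b)) n (bupd T Ob b a ob))))"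
  have eq: "Vtrue_n T Ob r \<gamma> \<pi> (Suc n) b - Vtrue_n T Ob r \<gamma> (\<lambda>b. \<pi> (\<phi> b)) (Suc n) b
      = (\<Sum>a\<in>UNIV. (\<pi> b a - \<pi> (\<phi> b) a) * Qp a) + X"
    unfolding X_def Qp_def Vtrue_n.simps(2) by (simp add: sum_subtractf left_diff_distrib)
  have Qb: "\<bar>Qp a\<bar> \<le> M" for a
  proof -
    have "\<bar>Qp a\<bar> \<le> Rmax + \<gamma> * M" unfolding Qp_def
      by (rule q_bound[OF b]) (rule Vn_bound[of \<pi>], rule pi_dist, assumption, rule U_B[OF b])
    then show ?thesis using M_eq by simp
  qed
  have "\<bar>\<Sum>a\<in>UNIV. (\<pi> b a - \<pi> (\<phi> b) a) * Qp a\<bar> \<le> (\<Sum>a\<in>UNIV. \<bar>(\<pi> b a - \<pi> (\<phi> b) a) * Qp a\<bar>)"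
    by (rule sum_abs)
  also have "\<dots> \<le> (\<Sum>a\<in>UNIV. \<bar>\<pi> b a - \<pi> (\<phi> b) a\<bar> * M)"
    by (rule sum_mono) (simp add: abs_mult Qb mult_left_mono)
  also have "\<dots> = l1dist (\<pi> b) (\<pi> (\<phi> b)) * M" unfolding l1dist_def by (simp add: sum_distrib_right)
  also have "\<dots> \<le> (L\<pi> * \<epsilon>) * M"
  proof (rule mult_right_mono[OF _ M_nonneg])
    have pb: "\<phi> b \<in> B" using phi_into b C_sub by blast
    have "l1dist b (\<phi> b) = l1dist (\<phi> b) b" unfolding l1dist_def by (simp add: abs_minus_commute)
    then have "l1dist b (\<phi> b) \<le> \<epsilon>" using phi_close[OF b] by simp
    then show "l1dist (\<pi> b) (\<pi> (\<phi> b)) \<le> L\<pi> * \<epsilon>"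
      using pi_lip[OF b pb] Lpi_nonneg by (meson mult_left_mono order_trans)
  qed
  finally have t1: "\<bar>\<Sum>a\<in>UNIV. (\<pi> b a - \<pi> (\<phi> b) a) * Qp a\<bar> \<le> L\<pi> * \<epsilon> * M" .
  have t2: "\<bar>X\<bar> \<le> \<gamma> * K1" unfolding X_def
    by (rule bell_diff[OF piphi_dist[OF b] b]) (rule Suc.IH, rule U_B[OF b])
  show ?case unfolding eq using t1 t2 K1_eq by linarith
qed

lemma final: assumes b: "b \<in> B"
  shows "\<bar>Vtrue T Ob r \<gamma> \<pi> b - Vbin T Ob r \<gamma> B C p \<phi> \<pi> (\<phi> b)\<bar> \<le> K1 + E"
proof -
  have Vp: "(\<lambda>n. Vtrue_n T Ob r \<gamma> \<pi> n b) \<longlonglongrightarrow> Vtrue T Ob r \<gamma> \<pi> b"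
    by (rule V_lim[of \<pi>]) (auto intro: pi_dist b)
  have l1: "\<bar>Vtrue T Ob r \<gamma> \<pi> b - W b\<bar> \<le> K1"
    by (rule lim_le_seq[OF tendsto_rabs[OF tendsto_diff[OF Vp W_lim[OF b]]] tendsto_const]) (rule part1[OF b])
  have g: "(\<lambda>n. E + \<gamma> ^ n * M) \<longlonglongrightarrow> E + 0 * M"
    by (rule tendsto_add[OF tendsto_const tendsto_mult_right[OF LIMSEQ_power_zero]]) (use gamma0 gamma1 in simp)
  have l2: "\<bar>W b - Vbin T Ob r \<gamma> B C p \<phi> \<pi> (\<phi> b)\<bar> \<le> E"
    using lim_le_seq[OF tendsto_rabs[OF tendsto_diff[OF tendsto_const vb_lim[OF phi_into[OF b]]]] g] part2[OF b]
    by simp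
  show ?thesis using l1 l2 by linarith
qed

lemma bound_arith: "K1 + E \<le> (((L\<pi> + 1) * Rmax + 2 * LV) / (1 - \<gamma>) + (\<gamma> * Rmax * L\<pi> + Rmax) / (1 - \<gamma>)^2) * \<epsilon>"
proof -
  have d: "0 < 1 - \<gamma>" using gamma1 by simp
  have eq: "(((L\<pi> + 1) * Rmax + 2 * LV) / (1 - \<gamma>) + (\<gamma> * Rmax * L\<pi> + Rmax) / (1 - \<gamma>)^2) * \<epsilon>
     = K1 + E + \<epsilon> * ((Rmax + LV) / (1 - \<gamma>) + Rmax / (1 - \<gamma>)^2)"
  proof -
    define e where "e = 1 - \<gamma>"
    have g: "\<gamma> = 1 - e" unfolding e_def by simp
    have ep: "e \<noteq> 0" using d unfolding e_def by simp
    show ?thesis unfolding K1_def E_def M_def e_def[symmetric] unfolding g using ep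
      by (simp add: field_simps power2_eq_square)
  qed
  have "0 \<le> \<epsilon> * ((Rmax + LV) / (1 - \<gamma>) + Rmax / (1 - \<gamma>)^2)"
    using eps d Rmax_nonneg LV_nonneg by simp
  then show ?thesis using eq by linarith
qed

end

theorem theorem2:
  fixes T :: "'s::finite \<Rightarrow> 'a::finite \<Rightarrow> 's \<Rightarrow> real"
    and Ob :: "'s \<Rightarrow> 'o::finite \<Rightarrow> real"
    and r :: "'s \<Rightarrow> 'a \<Rightarrow> real"
    and b0 :: "'s \<Rightarrow> real"
    and Rmax \<gamma> \<epsilon> L\<pi> LV :: real
    and C :: "('s \<Rightarrow> real) set"
    and \<phi> :: "('s \<Rightarrow> real) \<Rightarrow> ('s \<Rightarrow> real)"
    and p :: "('s \<Rightarrow> real) \<Rightarrow> ('s \<Rightarrow> real) \<Rightarrow> real"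
    and \<pi> :: "('s \<Rightarrow> real) \<Rightarrow> 'a \<Rightarrow> real"
  defines "B \<equiv> reach T Ob b0"
  assumes T_dist: "\<And>s a. is_dist (T s a)"
    and Ob_dist: "\<And>s'. is_dist (Ob s')"
    and b0_dist: "is_dist b0"
    and r_bounds: "\<And>s a. 0 \<le> r s a \<and> r s a \<le> Rmax"
    and gamma: "0 \<le> \<gamma>" "\<gamma> < 1"
    and eps: "0 \<le> \<epsilon>"
    and C_sub: "C \<subseteq> B"
    and phi_into: "\<And>b. b \<in> B \<Longrightarrow> \<phi> b \<in> C"
    and phi_close: "\<And>b. b \<in> B \<Longrightarrow> l1dist (\<phi> b) b \<le> \<epsilon>"
    and phi_bins: "\<And>b1 b2. b1 \<in> B \<Longrightarrow> b2 \<in> B \<Longrightarrow> \<phi> b1 = \<phi> b2 \<Longrightarrow> l1dist b1 b2 \<le> \<epsilon>"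
    and p_nonneg: "\<And>c b. c \<in> C \<Longrightarrow> 0 \<le> p c b"
    and p_supp: "\<And>c b. c \<in> C \<Longrightarrow> p c b \<noteq> 0 \<Longrightarrow> b \<in> B \<and> \<phi> b = c"
    and p_sum: "\<And>c. c \<in> C \<Longrightarrow> ((\<lambda>b. p c b) has_sum 1) B"
    and pi_dist: "\<And>b. b \<in> B \<Longrightarrow> is_dist (\<pi> b)"
    and Lpi_nonneg: "0 \<le> L\<pi>"
    and pi_lip: "\<And>b1 b2. b1 \<in> B \<Longrightarrow> b2 \<in> B \<Longrightarrow> l1dist (\<pi> b1) (\<pi> b2) \<le> L\<pi> * l1dist b1 b2"
    and LV_nonneg: "0 \<le> LV"
    and V_lip: "\<And>b1 b2. b1 \<in> B \<Longrightarrow> b2 \<in> B \<Longrightarrow>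
        \<bar>Vtrue T Ob r \<gamma> (\<lambda>b. \<pi> (\<phi> b)) b1 - Vtrue T Ob r \<gamma> (\<lambda>b. \<pi> (\<phi> b)) b2\<bar> \<le> LV * l1dist b1 b2"
  shows "\<forall>b\<in>B. \<bar>Vtrue T Ob r \<gamma> \<pi> b - Vbin T Ob r \<gamma> B C p \<phi> \<pi> (\<phi> b)\<bar>
           \<le> (((L\<pi> + 1) * Rmax + 2 * LV) / (1 - \<gamma>) + (\<gamma> * Rmax * L\<pi> + Rmax) / (1 - \<gamma>)^2) * \<epsilon>"
proof -
  interpret binned T Ob r b0 Rmax \<gamma> \<epsilon> L\<pi> LV C \<phi> p \<pi>
    by unfold_locales (use assms in \<open>simp_all add: B_def\<close>)
  show ?thesis
  proof
    fix b assume "b \<in> B"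
    then have b: "b \<in> reach T Ob b0" unfolding B_def .
    show "\<bar>Vtrue T Ob r \<gamma> \<pi> b - Vbin T Ob r \<gamma> B C p \<phi> \<pi> (\<phi> b)\<bar>
           \<le> (((L\<pi> + 1) * Rmax + 2 * LV) / (1 - \<gamma>) + (\<gamma> * Rmax * L\<pi> + Rmax) / (1 - \<gamma>)^2) * \<epsilon>"
      using final[OF b] bound_arith unfolding B_def by linarith
  qed
qed

end
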